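(* Let $\mathcal{M}\in\mathbb{R}^{m\times m}$ be a skew-symmetric matrix ($\mathcal{M}^\top=-\mathcal{M}$), viewed as the payoff matrix (for player 1) of a finite two-player zero-sum symmetric game in which each player has the pure strategy set $S_g=\{1,\dots,m\}$. Let $C=\{C_1,\dots,C_{|C|}\}$ be the Nash Clustering of this game, and for $k\in[|C|]$ let $\mathbf{p_k}=\mathrm{Nash}\big(\mathcal{M}\,\big|\,\bigcup_{r=k}^{|C|}C_r\big)$. Define $\mathrm{NPP}(C_i,C_j)=\mathbf{p_i}^\top\mathcal{M}\,\mathbf{p_j}$. Then $\mathrm{NPP}(C_i,C_j)\ge 0$ for all $i\le j$, and $\mathrm{NPP}(C_i,C_j)\le 0$ for all $i>j$.
   Context: For a nonempty subset $X\subseteq S_g$, a symmetric Nash equilibrium of the game restricted to $X$ is a probability vector $\mathbf{p}\in\Delta_m$ with $\mathbf{p}_s=0$ for $s\notin X$ such that $\mathbf{q}^\top\mathcal{M}\mathbf{p}\le \mathbf{p}^\top\mathcal{M}\mathbf{p}\le \mathbf{p}^\top\mathcal{M}\mathbf{q}$ for every probability vector $\mathbf{q}\in\Delta_m$ supported in $X$. $\mathrm{Nash}(\mathcal{M}\mid X)$ denotes the (unique) maximum-entropy such symmetric Nash equilibrium, i.e. the one maximizing $-\sum_j \mathbf{p}_j\log\mathbf{p}_j$, and $\mathrm{supp}(\mathbf{p})=\{s:\mathbf{p}_s>0\}$. Nash Clustering: set $C_0=\emptyset$ and $C_i=\mathrm{supp}\big(\mathrm{Nash}(\mathcal{M}\mid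 S_g\setminus\bigcup_{k=0}^{i-1}C_k)\big)$ for $i\ge1$ (defined while the remaining set is nonempty); the Nash Clustering is the collection $C=\{C_j: j\ge 1,\ C_j\neq\emptyset\}$, indexed in this order. *)

theory Defs
  imports Complex_Main
begin

text \<open>Pure strategies are indexed by 0..m-1 (i.e. S_g = {..<m}); a matrix is a function
  M :: nat \<Rightarrow> nat \<Rightarrow> real, only its entries with indices < m are relevant.\<close>

definition prob_vec :: "nat \<Rightarrow> (nat \<Rightarrow> real) \<Rightarrow> bool" where
  "prob_vec m p \<longleftrightarrow> (\<forall>s<m. 0 \<le> p s) \<and> (\<forall>s. m \<le> s \<longrightarrow> p s = 0) \<and> (\<Sum>s<m. p s) = 1"

definition supported_in :: "(nat \<Rightarrow> real) \<Rightarrow> nat set \<Rightarrow> bool" where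
  "supported_in p X \<longleftrightarrow> (\<forall>s. s \<notin> X \<longrightarrow> p s = 0)"

definition bil :: "(nat \<Rightarrow> nat \<Rightarrow> real) \<Rightarrow> nat \<Rightarrow> (nat \<Rightarrow> real) \<Rightarrow> (nat \<Rightarrow> real) \<Rightarrow> real" where
  "bil M m p q = (\<Sum>i<m. \<Sum>j<m. p i * M i j * q j)"

definition sym_nash :: "(nat \<Rightarrow> nat \<Rightarrow> real) \<Rightarrow> nat \<Rightarrow> nat set \<Rightarrow> (nat \<Rightarrow> real) \<Rightarrow> bool" where
  "sym_nash M m X p \<longleftrightarrow> prob_vec m p \<and> supported_in p X \<and>
     (\<forall>q. prob_vec m q \<and> supported_in q X \<longrightarrow>
        bil M m q p \<le> bil M m p p \<and> bil M m p p \<le> bil M m p q)"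

text \<open>Shannon entropy (note ln 0 = 0 in Isabelle, so 0 * ln 0 = 0).\<close>
definition entropy :: "nat \<Rightarrow> (nat \<Rightarrow> real) \<Rightarrow> real" where
  "entropy m p = - (\<Sum>j<m. p j * ln (p j))"

definition nash_me :: "(nat \<Rightarrow> nat \<Rightarrow> real) \<Rightarrow> nat \<Rightarrow> nat set \<Rightarrow> (nat \<Rightarrow> real)" where
  "nash_me M m X = (THE p. sym_nash M m X p \<and> (\<forall>q. sym_nash M m X q \<longrightarrow> entropy m q \<le> entropy m p))"

definition supp :: "nat \<Rightarrow> (nat \<Rightarrow> real) \<Rightarrow> nat set" where
  "supp m p = {s. s < m \<and> p s > 0}"

text \<open>Remaining set before step i+1 (0-indexed): S_g minus C_1 ... C_i.\<close>
fun nc_rem :: "(nat \<Rightarrow> nat \<Rightarrow> real) \<Rightarrow> nat \<Rightarrow> nat \<Rightarrow> nat set" where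
  "nc_rem M m 0 = {..<m}"
| "nc_rem M m (Suc i) = nc_rem M m i - supp m (nash_me M m (nc_rem M m i))"

text \<open>Cluster number k (0-indexed; corresponds to C_{k+1} in the paper).\<close>
definition nc_cluster :: "(nat \<Rightarrow> nat \<Rightarrow> real) \<Rightarrow> nat \<Rightarrow> nat \<Rightarrow> nat set" where
  "nc_cluster M m k = supp m (nash_me M m (nc_rem M m k))"

definition nc_num :: "(nat \<Rightarrow> nat \<Rightarrow> real) \<Rightarrow> nat \<Rightarrow> nat" where
  "nc_num M m = (LEAST i. nc_rem M m i = {})"

definition nc_p :: "(nat \<Rightarrow> nat \<Rightarrow> real) \<Rightarrow> nat \<Rightarrow> nat \<Rightarrow> (nat \<Rightarrow> real)" where
  "nc_p M m k = nash_me M m (\<Union>r\<in>{k..<nc_num M m}. nc_cluster M m r)"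

definition NPP :: "(nat \<Rightarrow> nat \<Rightarrow> real) \<Rightarrow> nat \<Rightarrow> nat \<Rightarrow> nat \<Rightarrow> real" where
  "NPP M m i j = bil M m (nc_p M m i) (nc_p M m j)"

end

theory Submission imports Defs "HOL-Analysis.Analysis" "HOL-Real_Asymp.Real_Asymp" begin

definition skewm :: "(nat \<Rightarrow> nat \<Rightarrow> real) \<Rightarrow> nat \<Rightarrow> bool" where
  "skewm M m \<longleftrightarrow> (\<forall>i<m. \<forall>j<m. M j i = - M i j)"

lemma bil_skew: assumes "skewm M m" shows "bil M m p q = - bil M m q p"
proof -
  have "bil M m q p = (\<Sum>j<m. \<Sum>i<m. q j * M j i * p i)" by (simp add: bil_def)
  also have "\<dots> = (\<Sum>i<m. \<Sum>j<m. q j * M j i * p i)" by (rule sum.swap)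
  also have "\<dots> = (\<Sum>i<m. \<Sum>j<m. - (p i * M i j * q j))"
  proof (intro sum.cong refl)
    fix i j assume "i \<in> {..<m}" "j \<in> {..<m}"
    then have "M j i = - M i j" using assms unfolding skewm_def by blast
    then show "q j * M j i * p i = - (p i * M i j * q j)" by simp
  qed
  also have "\<dots> = - bil M m p q" by (simp add: bil_def sum_negf)
  finally show ?thesis by simp
qed

lemma bil_self: "skewm M m \<Longrightarrow> bil M m p p = 0"
  using bil_skew[of M m p p] by simp

lemma bil_lin2: "bil M m q (\<lambda>s. a * p s + b * r s) = a * bil M m q p + b * bil M m q r"
  by (simp add: bil_def sum_distrib_left sum.distrib algebra_simps)

lemma bil_lin1: "bil M m (\<lambda>s. a * p s + b * r s) q = a * bil M m p q + b * bil M m r q"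
  by (simp add: bil_def sum_distrib_left sum.distrib algebra_simps)

definition colv :: "(nat \<Rightarrow> nat \<Rightarrow> real) \<Rightarrow> nat \<Rightarrow> (nat \<Rightarrow> real) \<Rightarrow> nat \<Rightarrow> real" where
  "colv M m p j = (\<Sum>k<m. M j k * p k)"

lemma bil_colv: "bil M m q p = (\<Sum>j<m. q j * colv M m p j)"
  by (simp add: bil_def colv_def sum_distrib_left mult.assoc)

lemma prob_vec_le1: assumes "prob_vec m p" shows "p s \<le> 1"
proof (cases "s < m")
  case True
  have "p s \<le> (\<Sum>s<m. p s)"
    using assms True unfolding prob_vec_def
    by (intro member_le_sum) auto
  then show ?thesis using assms unfolding prob_vec_def by simp
next
  case False then show ?thesis using assms unfolding prob_vec_def by simp
qed

lemma prob_vec_nonneg: "prob_vec m p \<Longrightarrow> 0 \<le> p s"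
  unfolding prob_vec_def by (cases "s < m") auto

lemma prob_vec_comb:
  assumes "prob_vec m p" "prob_vec m q" "0 \<le> a" "0 \<le> b" "a + b = 1"
  shows "prob_vec m (\<lambda>s. a * p s + b * q s)"
  using assms unfolding prob_vec_def
  by (simp add: sum.distrib sum_distrib_left[symmetric])

lemma supp_comb: "supported_in p X \<Longrightarrow> supported_in q X \<Longrightarrow> supported_in (\<lambda>s. a * p s + b * q s) X"
  unfolding supported_in_def by simp

lemma good_nash:
  assumes sk: "skewm M m" and p: "prob_vec m p" "supported_in p X"
    and c: "\<forall>j\<in>X. colv M m p j \<le> 0"
  shows "sym_nash M m X p"
  unfolding sym_nash_def
proof (intro conjI allI impI p)
  fix q assume q: "prob_vec m q \<and> supported_in q X"
  have "bil M m q p \<le> 0" unfolding bil_colv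
  proof (intro sum_nonpos)
    fix j assume "j \<in> {..<m}"
    show "q j * colv M m p j \<le> 0"
    proof (cases "j \<in> X")
      case True then show ?thesis using c q prob_vec_nonneg[of m q j]
        by (simp add: mult_nonneg_nonpos)
    next
      case False then show ?thesis using q unfolding supported_in_def by simp
    qed
  qed
  then show "bil M m q p \<le> bil M m p p" "bil M m p p \<le> bil M m p q"
    using bil_self[OF sk] bil_skew[OF sk, of p q] by auto
qed

lemma closed_const_imp: "closed {x. P x} \<Longrightarrow> closed {x::'a::topological_space. Q \<longrightarrow> P x}"
  by (cases Q) auto

lemma cont_coord [continuous_intros]: "continuous_on S (\<lambda>x::nat \<Rightarrow> real. x i)"
  by (rule continuous_on_subset[OF continuous_on_product_coordinates]) simp

lemma cont_sum_coord: "continuous_on S (\<lambda>p::nat \<Rightarrow> real. sum p A)"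
proof -
  have "continuous_on S (\<lambda>p::nat \<Rightarrow> real. \<Sum>i\<in>A. p i)"
    by (rule continuous_on_sum) (rule cont_coord)
  then show ?thesis by simp
qed

lemma cont_bil2: "continuous_on S (\<lambda>p. bil M m q p)"
  unfolding bil_def by (intro continuous_on_sum continuous_on_mult continuous_on_const cont_coord)

lemma cont_bil1: "continuous_on S (\<lambda>p. bil M m p q)"
  unfolding bil_def by (intro continuous_on_sum continuous_on_mult continuous_on_const cont_coord)

lemma cont_bil: "continuous_on S (\<lambda>p. bil M m p p)"
  unfolding bil_def by (intro continuous_on_sum continuous_on_mult continuous_on_const cont_coord)

lemma cont_colv: "continuous_on S (\<lambda>p. colv M m p j)"
  unfolding colv_def by (intro continuous_on_sum continuous_on_mult continuous_on_const cont_coord)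

definition SX :: "nat \<Rightarrow> nat set \<Rightarrow> (nat \<Rightarrow> real) set" where
  "SX m X = {p. prob_vec m p \<and> supported_in p X}"

lemma compact_cube: "compact (PiE UNIV (\<lambda>_::nat. {0..1::real}))"
proof -
  have "compactin (product_topology (\<lambda>i. euclidean) UNIV) (PiE UNIV (\<lambda>_::nat. {0..1::real}))"
    by (subst compactin_PiE) auto
  then show ?thesis by (simp add: euclidean_product_topology)
qed

lemma closed_SXc: "closed {p::nat\<Rightarrow>real. (\<forall>s. s < m \<longrightarrow> 0 \<le> p s) \<and> (\<forall>s. m \<le> s \<longrightarrow> p s = 0)
   \<and> sum p {..<m} = 1 \<and> (\<forall>s. s \<notin> X \<longrightarrow> p s = 0)}"
  by (intro closed_Collect_conj closed_Collect_all closed_const_imp closed_Collect_le closed_Collect_eq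
       continuous_on_const cont_coord cont_sum_coord)

lemma SX_eq: "SX m X = PiE UNIV (\<lambda>_::nat. {0..1::real}) \<inter> {p::nat\<Rightarrow>real. (\<forall>s. s < m \<longrightarrow> 0 \<le> p s) \<and> (\<forall>s. m \<le> s \<longrightarrow> p s = 0)
   \<and> sum p {..<m} = 1 \<and> (\<forall>s. s \<notin> X \<longrightarrow> p s = 0)}"
  unfolding SX_def
  apply (auto simp: prob_vec_def supported_in_def PiE_iff)
  using prob_vec_le1 prob_vec_nonneg unfolding prob_vec_def apply fastforce+
  done

lemma compact_SX: "compact (SX m X)"
  unfolding SX_eq by (intro compact_Int_closed compact_cube closed_SXc)

lemma cont_Max:
  fixes f :: "nat \<Rightarrow> (nat \<Rightarrow> real) \<Rightarrow> real" and X :: "nat set"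
  assumes "finite X" "X \<noteq> {}" "\<And>j. j \<in> X \<Longrightarrow> continuous_on S (f j)"
  shows "continuous_on S (\<lambda>p. Max ((\<lambda>j. f j p) ` X))"
  using assms
proof (induction X rule: finite_ne_induct)
  case (singleton x) then show ?case by simp
next
  case (insert x F)
  have eq: "(\<lambda>p. Max ((\<lambda>j. f j p) ` insert x F)) = (\<lambda>p. max (f x p) (Max ((\<lambda>j. f j p) ` F)))"
    using insert by (simp add: Max_insert)
  have c1: "continuous_on S (f x)" using insert.prems by auto
  have c2: "continuous_on S (\<lambda>p. Max ((\<lambda>j. f j p) ` F))" using insert by auto
  show ?case unfolding eq by (rule continuous_on_max[OF c1 c2])
qed

lemma pt_SX: "j0 \<in> X \<Longrightarrow> j0 < m \<Longrightarrow> (\<lambda>s. if s = j0 then 1 else 0) \<in> SX m X"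
  unfolding SX_def prob_vec_def supported_in_def by auto

lemma colv_lin: "colv M m (\<lambda>s. a * p s + b * q s) j = a * colv M m p j + b * colv M m q j"
  by (simp add: colv_def sum_distrib_left sum.distrib algebra_simps)

lemma supported_mono: "supported_in p Y \<Longrightarrow> Y \<subseteq> X \<Longrightarrow> supported_in p X"
  unfolding supported_in_def by auto

lemma nash_exists:
  assumes sk: "skewm M m" and fin: "finite X" and sub: "X \<subseteq> {..<m}" and ne: "X \<noteq> {}"
  shows "\<exists>p\<in>SX m X. \<forall>j\<in>X. colv M m p j \<le> 0"
  using fin sub ne
proof (induction X rule: finite_psubset_induct)
  case (psubset X)
  define v where "v p = Max ((\<lambda>j. colv M m p j) ` X)" for p
  have cont: "continuous_on (SX m X) v"
    unfolding v_def by (rule cont_Max) (use psubset in \<open>auto intro: cont_colv\<close>)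
  obtain j1 where "j1 \<in> X" using psubset by auto
  then have "SX m X \<noteq> {}" using pt_SX[of j1 X m] psubset by auto
  then obtain p0 where p0: "p0 \<in> SX m X" and min: "\<forall>y\<in>SX m X. v p0 \<le> v y"
    using continuous_attains_inf[OF compact_SX _ cont] by blast
  have vge: "colv M m p j \<le> v p" if "j \<in> X" for p j
    unfolding v_def using psubset that by (intro Max_ge) auto
  show ?case
  proof (cases "v p0 \<le> 0")
    case True
    show ?thesis
    proof (intro bexI[OF _ p0] ballI)
      fix j assume "j \<in> X"
      then show "colv M m p0 j \<le> 0" using vge[of j p0] True by linarith
    qed
  next
    case False
    then have vpos: "0 < v p0" by simp
    have "\<exists>j0\<in>X. colv M m p0 j0 < v p0"
    proof (rule ccontr)
      assume "\<not> ?thesis"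
      then have ge: "\<forall>j\<in>X. v p0 \<le> colv M m p0 j" by auto
      have pv: "prob_vec m p0" "supported_in p0 X" using p0 unfolding SX_def by auto
      have "(\<Sum>j<m. p0 j * v p0) \<le> (\<Sum>j<m. p0 j * colv M m p0 j)"
      proof (intro sum_mono)
        fix j assume "j \<in> {..<m}"
        show "p0 j * v p0 \<le> p0 j * colv M m p0 j"
        proof (cases "j \<in> X")
          case True then show ?thesis using ge prob_vec_nonneg[OF pv(1), of j]
            by (intro mult_left_mono) auto
        next
          case False then show ?thesis using pv(2) unfolding supported_in_def by simp
        qed
      qed
      also have "\<dots> = 0" using bil_self[OF sk, of p0] by (simp add: bil_colv)
      finally have "(\<Sum>j<m. p0 j * v p0) \<le> 0" .
      then have "(\<Sum>j<m. p0 j) * v p0 \<le> 0" by (simp add: sum_distrib_right)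
      then show False using pv(1) vpos unfolding prob_vec_def by simp
    qed
    then obtain j0 where j0: "j0 \<in> X" "colv M m p0 j0 < v p0" by blast
    show ?thesis
    proof (cases "X - {j0} = {}")
      case True
      then have "X = {j0}" using j0 by auto
      then have "v p0 = colv M m p0 j0" unfolding v_def by simp
      then show ?thesis using j0 by simp
    next
      case False
      have "X - {j0} \<subset> X" using j0 by auto
      then obtain p1 where p1: "p1 \<in> SX m (X - {j0})" "\<forall>j\<in>X - {j0}. colv M m p1 j \<le> 0"
        using psubset.IH[of "X - {j0}"] psubset.prems False by auto
      define lam where "lam = v p0"
      define a where "a = colv M m p0 j0"
      define b where "b = colv M m p1 j0"
      define e where "e = min (1/2) ((lam - a) / (2 * (\<bar>b - a\<bar> + 1)))"
      have alam: "a < lam" using j0 by (simp add: a_def lam_def)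
      have lampos: "0 < lam" using vpos by (simp add: lam_def)
      have "0 \<le> \<bar>b - a\<bar>" by simp
      then have "0 < \<bar>b - a\<bar> + 1" by argo
      then have "0 < 2 * (\<bar>b - a\<bar> + 1)" by (rule mult_pos_pos[rotated]) simp
      moreover have "0 < lam - a" using alam by linarith
      ultimately have "0 < (lam - a) / (2 * (\<bar>b - a\<bar> + 1))" by (rule divide_pos_pos[rotated])
      then have epos: "0 < e" by (simp add: e_def)
      have ehalf: "e \<le> 1/2" unfolding e_def by (rule min.cobounded1)
      have "e * (\<bar>b - a\<bar> + 1) \<le> ((lam - a) / (2 * (\<bar>b - a\<bar> + 1))) * (\<bar>b - a\<bar> + 1)"
        unfolding e_def by (intro mult_right_mono) auto
      also have "\<dots> = (lam - a) / 2"
      proof -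
        have "0 \<le> \<bar>b - a\<bar>" by simp
        then have "\<bar>b - a\<bar> + 1 \<noteq> 0" by linarith
        moreover have "x / (2 * c) * c = x / 2" if "c \<noteq> 0" for x c :: real
          using that by (simp add: field_simps)
        ultimately show ?thesis by blast
      qed
      finally have ekey: "e * (\<bar>b - a\<bar> + 1) \<le> (lam - a) / 2" .
      define pe where "pe = (\<lambda>s. (1 - e) * p0 s + e * p1 s)"
      have peS: "pe \<in> SX m X"
        using p0 p1 epos ehalf unfolding pe_def SX_def
        by (auto intro!: prob_vec_comb supp_comb intro: supported_mono)
      have lt: "colv M m pe j < lam" if "j \<in> X" for j
      proof (cases "j = j0")
        case True
        have "colv M m pe j = a + e * (b - a)"
          unfolding pe_def colv_lin True a_def b_def by (simp add: algebra_simps)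
        also have "\<dots> \<le> a + e * (\<bar>b - a\<bar> + 1)"
          using epos by (intro add_left_mono mult_left_mono) auto
        also have "\<dots> < lam"
        proof -
          have "a + c < lam" if "c \<le> (lam - a) / 2" "a < lam" for c :: real
            using that by argo
          then show ?thesis using ekey alam by blast
        qed
        finally show ?thesis .
      next
        case False
        have c0: "colv M m p0 j \<le> lam" using vge[OF that] by (simp add: lam_def)
        have c1: "colv M m p1 j \<le> 0" using p1 that False by auto
        have "colv M m pe j = (1 - e) * colv M m p0 j + e * colv M m p1 j"
          unfolding pe_def colv_lin by simp
        also have "\<dots> \<le> (1 - e) * lam + e * 0"
          using epos ehalf c0 c1 by (intro add_mono mult_left_mono) auto
        also have "\<dots> < lam" using epos lampos by (simp add: algebra_simps)
        finally show ?thesis .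
      qed
      have "v pe < lam"
        unfolding v_def using psubset lt by (subst Max_less_iff) auto
      then show ?thesis using min peS by (auto simp: lam_def)
    qed
  qed
qed

lemma nash_exists_sym:
  assumes sk: "skewm M m" and sub: "X \<subseteq> {..<m}" and ne: "X \<noteq> {}"
  shows "\<exists>p. sym_nash M m X p"
proof -
  have "finite X" using sub finite_subset by blast
  then obtain p where "p \<in> SX m X" "\<forall>j\<in>X. colv M m p j \<le> 0"
    using nash_exists[OF sk _ sub ne] by blast
  then show ?thesis using good_nash[OF sk] unfolding SX_def by blast
qed

lemma nash_mid:
  assumes sk: "skewm M m" and p: "sym_nash M m X p" and q: "sym_nash M m X q"
  shows "sym_nash M m X (\<lambda>s. (1/2) * p s + (1/2) * q s)"
  unfolding sym_nash_def
proof (intro conjI allI impI)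
  show "prob_vec m (\<lambda>s. (1/2) * p s + (1/2) * q s)"
    using p q unfolding sym_nash_def by (intro prob_vec_comb) auto
  show "supported_in (\<lambda>s. (1/2) * p s + (1/2) * q s) X"
    using p q unfolding sym_nash_def by (intro supp_comb) auto
  fix r assume r: "prob_vec m r \<and> supported_in r X"
  have a: "bil M m r p \<le> 0" "bil M m r q \<le> 0" "0 \<le> bil M m p r" "0 \<le> bil M m q r"
    using p q r bil_self[OF sk, of p] bil_self[OF sk, of q] unfolding sym_nash_def by auto
  have z: "bil M m (\<lambda>s. (1/2) * p s + (1/2) * q s) (\<lambda>s. (1/2) * p s + (1/2) * q s) = 0"
    by (rule bil_self[OF sk])
  have e1: "bil M m r (\<lambda>s. (1/2) * p s + (1/2) * q s) = (1/2) * bil M m r p + (1/2) * bil M m r q"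
    by (rule bil_lin2)
  have e2: "bil M m (\<lambda>s. (1/2) * p s + (1/2) * q s) r = (1/2) * bil M m p r + (1/2) * bil M m q r"
    by (rule bil_lin1)
  show "bil M m r (\<lambda>s. (1/2) * p s + (1/2) * q s) \<le> bil M m (\<lambda>s. (1/2) * p s + (1/2) * q s) (\<lambda>s. (1/2) * p s + (1/2) * q s)"
    using z e1 a by argo
  show "bil M m (\<lambda>s. (1/2) * p s + (1/2) * q s) (\<lambda>s. (1/2) * p s + (1/2) * q s) \<le> bil M m (\<lambda>s. (1/2) * p s + (1/2) * q s) r"
    using z e2 a by argo
qed

lemma cont_xlnx: "continuous_on {0..} (\<lambda>x::real. x * ln x)"
proof -
  have "continuous (at x within {0..}) (\<lambda>x::real. x * ln x)" if "x \<in> {0..}" for x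
  proof (cases "x = 0")
    case True
    have "((\<lambda>x::real. x * ln x) \<longlongrightarrow> 0) (at_right 0)" by real_asymp
    then show ?thesis using True by (simp add: continuous_within at_within_Ici_at_right)
  next
    case False
    then have "x > 0" using that by auto
    then have "isCont (\<lambda>x::real. x * ln x) x"
      by (intro continuous_mult continuous_ident isCont_ln) auto
    then show ?thesis by (rule continuous_at_imp_continuous_within)
  qed
  then show ?thesis by (simp add: continuous_on_eq_continuous_within)
qed

lemma cont_entropy: "continuous_on (SX m X) (\<lambda>p. entropy m p)"
proof -
  have "continuous_on (SX m X) (\<lambda>p. p j * ln (p j))" for j
    by (rule continuous_on_compose2[OF cont_xlnx cont_coord])
       (auto simp: SX_def intro: prob_vec_nonneg)
  then have "continuous_on (SX m X) (\<lambda>p. - (\<Sum>j<m. p j * ln (p j)))"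
    by (intro continuous_on_minus continuous_on_sum) auto
  then show ?thesis unfolding entropy_def .
qed

lemma NS_eq: "{p. sym_nash M m X p} = SX m X \<inter>
  {p. \<forall>q. (prob_vec m q \<and> supported_in q X) \<longrightarrow> bil M m q p \<le> bil M m p p \<and> bil M m p p \<le> bil M m p q}"
  unfolding SX_def sym_nash_def by auto

lemma compact_NS: "compact {p. sym_nash M m X p}"
  unfolding NS_eq
  by (intro compact_Int_closed compact_SX closed_Collect_all closed_const_imp closed_Collect_conj
      closed_Collect_le cont_bil cont_bil1 cont_bil2)

lemma ln_strict: fixes y :: real assumes "0 < y" "y \<noteq> 1" shows "ln y < y - 1"
proof -
  define r where "r = sqrt y"
  have r: "0 < r" "r \<noteq> 1" using assms by (auto simp: r_def)
  have y: "y = r * r" using assms by (simp add: r_def)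
  have "ln y = 2 * ln r" using assms by (simp add: r_def ln_sqrt)
  also have "\<dots> \<le> 2 * (r - 1)" using ln_le_minus_one[OF r(1)] by simp
  also have "\<dots> < y - 1"
  proof -
    have "r - 1 \<noteq> 0" using r by argo
    then have "0 < (r - 1) * (r - 1)" using not_real_square_gt_zero by blast
    moreover have "y - 1 - 2 * (r - 1) = (r - 1) * (r - 1)" unfolding y by (simp add: algebra_simps)
    ultimately show ?thesis by argo
  qed
  finally show ?thesis .
qed

lemma xlog_key:
  fixes x s :: real
  assumes "0 \<le> x" "0 < s"
  shows "x - s \<le> x * ln x - x * ln s" and "x \<noteq> s \<Longrightarrow> x - s < x * ln x - x * ln s"
proof -
  have both: "x - s \<le> x * ln x - x * ln s \<and> (x \<noteq> s \<longrightarrow> x - s < x * ln x - x * ln s)"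
  proof (cases "x = 0")
    case True
    then have h: "x * ln x - x * ln s = 0" by simp
    show ?thesis unfolding h using assms True by argo
  next
    case False
    then have xp: "0 < x" using assms by simp
    have eq: "x * ln x - x * ln s = - (x * ln (s / x))"
      using xp assms by (simp add: ln_div algebra_simps)
    have "x * ln (s / x) \<le> x * (s / x - 1)"
      using ln_le_minus_one[of "s / x"] xp assms by (intro mult_left_mono) auto
    moreover have "x * (s / x - 1) = s - x" using xp by (simp add: field_simps)
    moreover have "x \<noteq> s \<longrightarrow> x * ln (s / x) < x * (s / x - 1)"
    proof
      assume "x \<noteq> s"
      then have "s / x \<noteq> 1" using xp by (simp add: field_simps)
      then have "ln (s / x) < s / x - 1" using xp assms by (intro ln_strict) auto
      then show "x * ln (s / x) < x * (s / x - 1)" using xp by simp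
    qed
    ultimately show ?thesis unfolding eq by argo
  qed
  then show "x - s \<le> x * ln x - x * ln s" by blast
  show "x \<noteq> s \<Longrightarrow> x - s < x * ln x - x * ln s" using both by blast
qed

lemma xlog_mid:
  fixes a b :: real
  assumes "0 \<le> a" "0 \<le> b"
  shows "((1/2) * a + (1/2) * b) * ln ((1/2) * a + (1/2) * b) \<le> (1/2) * (a * ln a) + (1/2) * (b * ln b)"
    and "a \<noteq> b \<Longrightarrow> ((1/2) * a + (1/2) * b) * ln ((1/2) * a + (1/2) * b) < (1/2) * (a * ln a) + (1/2) * (b * ln b)"
proof -
  define s where "s = (1/2) * a + (1/2) * b"
  have both: "s * ln s \<le> (1/2) * (a * ln a) + (1/2) * (b * ln b) \<and>
     (a \<noteq> b \<longrightarrow> s * ln s < (1/2) * (a * ln a) + (1/2) * (b * ln b))"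
  proof (cases "s = 0")
    case True
    then have "a = 0" "b = 0" using assms by (auto simp: s_def)
    then show ?thesis using True by simp
  next
    case False
    then have sp: "0 < s" using assms by (simp add: s_def)
    note ka = xlog_key[OF assms(1) sp] and kb = xlog_key[OF assms(2) sp]
    have ss: "s * ln s = (1/2) * (a * ln s) + (1/2) * (b * ln s) + (1/2) * (a - s) + (1/2) * (b - s)"
      by (simp add: s_def algebra_simps)
    have "a \<noteq> b \<Longrightarrow> a \<noteq> s" by (auto simp: s_def)
    then show ?thesis unfolding ss using ka kb by argo
  qed
  then show "((1/2) * a + (1/2) * b) * ln ((1/2) * a + (1/2) * b) \<le> (1/2) * (a * ln a) + (1/2) * (b * ln b)"
    unfolding s_def by blast
  show "a \<noteq> b \<Longrightarrow> ((1/2) * a + (1/2) * b) * ln ((1/2) * a + (1/2) * b) < (1/2) * (a * ln a) + (1/2) * (b * ln b)"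
    using both unfolding s_def by blast
qed

lemma entropy_mid:
  assumes p: "prob_vec m p" and q: "prob_vec m q"
  shows "(1/2) * entropy m p + (1/2) * entropy m q \<le> entropy m (\<lambda>s. (1/2) * p s + (1/2) * q s)"
    and "p \<noteq> q \<Longrightarrow> (1/2) * entropy m p + (1/2) * entropy m q < entropy m (\<lambda>s. (1/2) * p s + (1/2) * q s)"
proof -
  define G where "G f = (\<Sum>j<m. f j * ln (f j))" for f :: "nat \<Rightarrow> real"
  have eq: "(1/2) * entropy m p + (1/2) * entropy m q = - (\<Sum>j<m. (1/2) * (p j * ln (p j)) + (1/2) * (q j * ln (q j)))"
    unfolding entropy_def by (simp add: sum.distrib sum_distrib_left)
  have le: "\<forall>j\<in>{..<m}. ((1/2) * p j + (1/2) * q j) * ln ((1/2) * p j + (1/2) * q j)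
       \<le> (1/2) * (p j * ln (p j)) + (1/2) * (q j * ln (q j))"
    using xlog_mid(1) prob_vec_nonneg[OF p] prob_vec_nonneg[OF q] by blast
  have "(\<Sum>j<m. ((1/2) * p j + (1/2) * q j) * ln ((1/2) * p j + (1/2) * q j))
       \<le> (\<Sum>j<m. (1/2) * (p j * ln (p j)) + (1/2) * (q j * ln (q j)))"
    using le by (intro sum_mono) auto
  moreover have em: "entropy m (\<lambda>s. (1/2) * p s + (1/2) * q s) =
     - (\<Sum>j<m. ((1/2) * p j + (1/2) * q j) * ln ((1/2) * p j + (1/2) * q j))"
    by (simp only: entropy_def)
  ultimately show "(1/2) * entropy m p + (1/2) * entropy m q \<le> entropy m (\<lambda>s. (1/2) * p s + (1/2) * q s)"
    using eq by argo
  assume "p \<noteq> q"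
  then obtain j where j: "p j \<noteq> q j" by auto
  then have jm: "j < m" using p q unfolding prob_vec_def by (metis not_le)
  have "(\<Sum>j<m. ((1/2) * p j + (1/2) * q j) * ln ((1/2) * p j + (1/2) * q j))
       < (\<Sum>j<m. (1/2) * (p j * ln (p j)) + (1/2) * (q j * ln (q j)))"
  proof (rule sum_strict_mono_ex1)
    show "\<exists>a\<in>{..<m}. ((1/2) * p a + (1/2) * q a) * ln ((1/2) * p a + (1/2) * q a)
       < (1/2) * (p a * ln (p a)) + (1/2) * (q a * ln (q a))"
      using xlog_mid(2)[OF prob_vec_nonneg[OF p] prob_vec_nonneg[OF q] j] jm by blast
  qed (use le in auto)
  then show "(1/2) * entropy m p + (1/2) * entropy m q < entropy m (\<lambda>s. (1/2) * p s + (1/2) * q s)"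
    using eq em by argo
qed

lemma nash_me_spec:
  assumes sk: "skewm M m" and sub: "X \<subseteq> {..<m}" and ne: "X \<noteq> {}"
  shows "sym_nash M m X (nash_me M m X)"
proof -
  let ?N = "{p. sym_nash M m X p}"
  have "?N \<noteq> {}" using nash_exists_sym[OF sk sub ne] by auto
  moreover have "continuous_on ?N (\<lambda>p. entropy m p)"
    by (rule continuous_on_subset[OF cont_entropy]) (auto simp: SX_def sym_nash_def)
  ultimately obtain p0 where p0: "sym_nash M m X p0" and mx: "\<forall>q. sym_nash M m X q \<longrightarrow> entropy m q \<le> entropy m p0"
    using continuous_attains_sup[OF compact_NS] by blast
  have uniq: "p = p0" if "sym_nash M m X p" "\<forall>q. sym_nash M m X q \<longrightarrow> entropy m q \<le> entropy m p" for p
  proof (rule ccontr)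
    assume ne: "p \<noteq> p0"
    have e1: "entropy m p0 \<le> entropy m p" using that(2) p0 by blast
    have e2: "entropy m p \<le> entropy m p0" using mx that(1) by blast
    have e: "entropy m p = entropy m p0" using e1 e2 by (rule antisym[rotated])
    have mid: "sym_nash M m X (\<lambda>s. (1/2) * p s + (1/2) * p0 s)" by (rule nash_mid[OF sk that(1) p0])
    have "(1/2) * entropy m p + (1/2) * entropy m p0 < entropy m (\<lambda>s. (1/2) * p s + (1/2) * p0 s)"
      using entropy_mid(2)[OF _ _ ne] that(1) p0 unfolding sym_nash_def by blast
    moreover have "entropy m (\<lambda>s. (1/2) * p s + (1/2) * p0 s) \<le> entropy m p0" using mx mid by blast
    ultimately show False using e by argo
  qed
  have "nash_me M m X = p0"
    unfolding nash_me_def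
  proof (rule the_equality)
    show "sym_nash M m X p0 \<and> (\<forall>q. sym_nash M m X q \<longrightarrow> entropy m q \<le> entropy m p0)"
      using p0 mx by blast
  next
    fix p assume "sym_nash M m X p \<and> (\<forall>q. sym_nash M m X q \<longrightarrow> entropy m q \<le> entropy m p)"
    then show "p = p0" using uniq by blast
  qed
  then show ?thesis using p0 by simp
qed

lemma rem_sub: "nc_rem M m i \<subseteq> {..<m}"
  by (induction i) auto

lemma rem_mono: "i \<le> j \<Longrightarrow> nc_rem M m j \<subseteq> nc_rem M m i"
  by (rule lift_Suc_antimono_le[where f = "nc_rem M m"]) auto

lemma supp_sub0: "supported_in p X \<Longrightarrow> supp m p \<subseteq> X"
  unfolding supported_in_def supp_def by fastforce

lemma supp_sub: "sym_nash M m X p \<Longrightarrow> supp m p \<subseteq> X"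
  unfolding sym_nash_def by (intro supp_sub0) (elim conjE)

lemma supp_ne: assumes "prob_vec m p" shows "supp m p \<noteq> {}"
proof
  assume "supp m p = {}"
  have "p s = 0" if "s < m" for s
  proof -
    have "0 \<le> p s" by (rule prob_vec_nonneg[OF assms])
    moreover have "\<not> 0 < p s" using \<open>supp m p = {}\<close> that unfolding supp_def by blast
    ultimately show ?thesis by simp
  qed
  then have "(\<Sum>s<m. p s) = 0" by simp
  then show False using assms unfolding prob_vec_def by simp
qed

lemma rem_shrink:
  assumes sk: "skewm M m" and ne: "nc_rem M m i \<noteq> {}"
  shows "card (nc_rem M m (Suc i)) < card (nc_rem M m i)"
proof -
  let ?p = "nash_me M m (nc_rem M m i)"
  have sn: "sym_nash M m (nc_rem M m i) ?p" by (rule nash_me_spec[OF sk rem_sub ne])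
  have "supp m ?p \<subseteq> nc_rem M m i" by (rule supp_sub[OF sn])
  moreover have "supp m ?p \<noteq> {}"
    by (rule supp_ne) (rule conjunct1[OF sn[unfolded sym_nash_def]])
  moreover have "nc_rem M m (Suc i) = nc_rem M m i - supp m ?p" by (simp only: nc_rem.simps)
  ultimately have "nc_rem M m (Suc i) \<subset> nc_rem M m i" by blast
  moreover have "finite (nc_rem M m i)" by (rule finite_subset[OF rem_sub]) simp
  ultimately show ?thesis by (rule psubset_card_mono[rotated])
qed

lemma rem_card: assumes sk: "skewm M m" shows "nc_rem M m i = {} \<or> card (nc_rem M m i) + i \<le> m"
proof (induction i)
  case 0 then show ?case by simp
next
  case (Suc i)
  show ?case
  proof (cases "nc_rem M m i = {}")
    case True then show ?thesis by simp
  next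
    case False
    then have "card (nc_rem M m (Suc i)) < card (nc_rem M m i)" by (rule rem_shrink[OF sk])
    then show ?thesis using Suc False by simp
  qed
qed

lemma rem_num:
  assumes sk: "skewm M m"
  shows "nc_rem M m (nc_num M m) = {}" and "\<And>k. k < nc_num M m \<Longrightarrow> nc_rem M m k \<noteq> {}"
proof -
  have "nc_rem M m m = {}"
  proof -
    have "finite (nc_rem M m m)" by (rule finite_subset[OF rem_sub]) simp
    then show ?thesis using rem_card[OF sk, of m] by simp
  qed
  then have ex: "\<exists>i. nc_rem M m i = {}" by blast
  show "nc_rem M m (nc_num M m) = {}" unfolding nc_num_def by (rule LeastI_ex[OF ex])
  show "nc_rem M m k \<noteq> {}" if "k < nc_num M m" for k
    using not_less_Least[of k "\<lambda>i. nc_rem M m i = {}"] that unfolding nc_num_def by blast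
qed

lemma union_rem:
  assumes sk: "skewm M m" and k: "k \<le> nc_num M m"
  shows "(\<Union>r\<in>{k..<nc_num M m}. nc_cluster M m r) = nc_rem M m k"
  using k
proof (induction k rule: inc_induct)
  case base then show ?case using rem_num(1)[OF sk] by simp
next
  case (step k)
  have ne: "nc_rem M m k \<noteq> {}" using rem_num(2)[OF sk step(2)] .
  have sub: "nc_cluster M m k \<subseteq> nc_rem M m k"
    unfolding nc_cluster_def by (rule supp_sub[OF nash_me_spec[OF sk rem_sub ne]])
  have "{k..<nc_num M m} = insert k {Suc k..<nc_num M m}" using step(2) by auto
  then have "(\<Union>r\<in>{k..<nc_num M m}. nc_cluster M m r) = nc_cluster M m k \<union> nc_rem M m (Suc k)"
    using step(3) by simp
  also have "\<dots> = nc_rem M m k" using sub by (auto simp: nc_cluster_def)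
  finally show ?case .
qed

theorem theorem2:
  fixes M :: "nat \<Rightarrow> nat \<Rightarrow> real" and m :: nat
  assumes "0 < m"
    and skew: "\<forall>i<m. \<forall>j<m. M j i = - M i j"
  shows "\<forall>i<nc_num M m. \<forall>j<nc_num M m.
           (i \<le> j \<longrightarrow> NPP M m i j \<ge> 0) \<and> (j < i \<longrightarrow> NPP M m i j \<le> 0)"
proof (intro allI impI conjI)
  have sk: "skewm M m" using skew unfolding skewm_def by blast
  have pk: "nc_p M m k = nash_me M m (nc_rem M m k)" if "k < nc_num M m" for k
    unfolding nc_p_def using union_rem[OF sk, of k] that by simp
  have sn: "sym_nash M m (nc_rem M m k) (nc_p M m k)" if "k < nc_num M m" for k
    unfolding pk[OF that] by (rule nash_me_spec[OF sk rem_sub rem_num(2)[OF sk that]])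
  fix i j assume i: "i < nc_num M m" and j: "j < nc_num M m"
  {
    assume "i \<le> j"
    then have "nc_rem M m j \<subseteq> nc_rem M m i" by (rule rem_mono)
    then have "prob_vec m (nc_p M m j) \<and> supported_in (nc_p M m j) (nc_rem M m i)"
      using sn[OF j] unfolding sym_nash_def by (auto intro: supported_mono)
    then have "bil M m (nc_p M m i) (nc_p M m i) \<le> bil M m (nc_p M m i) (nc_p M m j)"
      using sn[OF i] unfolding sym_nash_def by blast
    then show "NPP M m i j \<ge> 0" unfolding NPP_def using bil_self[OF sk] by simp
  }
  {
    assume "j < i"
    then have "nc_rem M m i \<subseteq> nc_rem M m j" by (intro rem_mono) simp
    then have "prob_vec m (nc_p M m i) \<and> supported_in (nc_p M m i) (nc_rem M m j)"
      using sn[OF i] unfolding sym_nash_def by (auto intro: supported_mono)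
    then have "bil M m (nc_p M m i) (nc_p M m j) \<le> bil M m (nc_p M m j) (nc_p M m j)"
      using sn[OF j] unfolding sym_nash_def by blast
    then show "NPP M m i j \<le> 0" unfolding NPP_def using bil_self[OF sk] by simp
  }
qed

end
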